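(* Let $Q=(q_n)$ be a basic sequence with $\lim_{N\to\infty}\frac1N\sum_{n=1}^N\frac1{q_n}=0$, and let $x=E_0.E_1E_2\cdots$ (w.r.t. $Q$) be $Q$-distribution normal. If $y=F_0.F_1F_2\cdots$ (w.r.t. $Q$) satisfies $\lim_{n\to\infty}\frac{|E_n-F_n|}{q_n}=0$, then $y$ is $Q$-distribution normal.
   Context: A basic sequence is a sequence $Q=(q_n)_{n\ge1}$ of integers with $q_n\ge2$. The $Q$-Cantor series expansion of a real $x$ is the unique expansion $x=E_0+\sum_{n\ge1}\frac{E_n}{q_1\cdots q_n}$ with $E_0=\lfloor x\rfloor$, $E_n\in\{0,\dots,q_n-1\}$ and $E_n\ne q_n-1$ infinitely often; written $x=E_0.E_1E_2\cdots$ w.r.t. $Q$. Let $T_{Q,n}(x)=\left(\prod_{j=1}^n q_j\right)x \bmod 1$. A real $x$ is $Q$-distribution normal if $(T_{Q,n}(x))_{n\ge0}$ is uniformly distributed modulo $1$. *)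

theory Defs
  imports "HOL-Analysis.Analysis"
begin

text \<open>A basic sequence is indexed from 1: q 1, q 2, ...; the value q 0 is irrelevant.\<close>
definition basic_seq :: "(nat \<Rightarrow> nat) \<Rightarrow> bool" where
  "basic_seq q \<longleftrightarrow> (\<forall>n\<ge>1. q n \<ge> 2)"

definition Qprod :: "(nat \<Rightarrow> nat) \<Rightarrow> nat \<Rightarrow> nat" where
  "Qprod q n = (\<Prod>j=1..n. q j)"

definition cantor_expansion :: "(nat \<Rightarrow> nat) \<Rightarrow> real \<Rightarrow> (nat \<Rightarrow> int) \<Rightarrow> bool" where
  "cantor_expansion q x E \<longleftrightarrow>
     E 0 = \<lfloor>x\<rfloor> \<and>
     (\<forall>n\<ge>1. 0 \<le> E n \<and> E n \<le> int (q n) - 1) \<and>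
     (\<lambda>n. real_of_int (E (Suc n)) / real (Qprod q (Suc n))) sums (x - real_of_int (E 0)) \<and>
     (\<exists>\<^sub>\<infinity>n. E n \<noteq> int (q n) - 1)"

definition T_Q :: "(nat \<Rightarrow> nat) \<Rightarrow> nat \<Rightarrow> real \<Rightarrow> real" where
  "T_Q q n x = frac (real (Qprod q n) * x)"

definition unif_distr_mod1 :: "(nat \<Rightarrow> real) \<Rightarrow> bool" where
  "unif_distr_mod1 s \<longleftrightarrow>
     (\<forall>a b. 0 \<le> a \<and> a < b \<and> b \<le> 1 \<longrightarrow>
        (\<lambda>N. real (card {n. n < N \<and> a \<le> frac (s n) \<and> frac (s n) < b}) / real N)
          \<longlonglongrightarrow> b - a)"

definition Q_distribution_normal :: "(nat \<Rightarrow> nat) \<Rightarrow> real \<Rightarrow> bool" where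
  "Q_distribution_normal q x \<longleftrightarrow> unif_distr_mod1 (\<lambda>n. T_Q q n x)"

end

theory Submission
  imports Defs
begin
lemma Qprod_Suc: "Qprod q (Suc n) = Qprod q n * q (Suc n)"
  unfolding Qprod_def by (simp add: prod.nat_ivl_Suc' mult.commute)
lemma Qprod_pos: assumes "basic_seq q" shows "Qprod q n > 0"
  unfolding Qprod_def
proof (intro prod_pos)
  fix a assume "a \<in> {1..n}" then have "2 \<le> q a" using assms by (auto simp: basic_seq_def)
  thus "0 < q a" by simp
qed
lemma Qprod_dvd: "m \<le> n \<Longrightarrow> Qprod q m dvd Qprod q n"
  unfolding Qprod_def by (intro prod_dvd_prod_subset) auto
lemma sum_shift1: "(\<Sum>n<N. f (Suc n)) = (\<Sum>n=1..N. (f::nat\<Rightarrow>real) n)"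
  by (induction N) (auto simp: sum.atLeast_Suc_atMost)

lemma cesaro0:
  fixes a :: "nat \<Rightarrow> real"
  assumes "a \<longlonglongrightarrow> 0" "\<And>n. a n \<ge> 0"
  shows "(\<lambda>N. (\<Sum>n<N. a n) / real N) \<longlonglongrightarrow> 0"
proof (rule LIMSEQ_I)
  fix r :: real assume r: "0 < r"
  obtain M where M: "\<And>n. n \<ge> M \<Longrightarrow> norm (a n - 0) < r/2"
    using LIMSEQ_D[OF assms(1), of "r/2"] r by auto
  define S where "S = (\<Sum>n<M. a n)"
  have S0: "S \<ge> 0" unfolding S_def using assms(2) by (simp add: sum_nonneg)
  obtain K :: nat where K: "real K > 2 * S / r" using reals_Archimedean2 by blast
  show "\<exists>no. \<forall>N\<ge>no. norm ((\<Sum>n<N. a n) / real N - 0) < r"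
  proof (intro exI allI impI)
    fix N assume N: "N \<ge> max (Suc M) K"
    then have Npos: "real N > 0" by simp
    have split: "(\<Sum>n<N. a n) = S + (\<Sum>n\<in>{M..<N}. a n)"
      unfolding S_def using N
      by (metis max.bounded_iff Suc_leD sum.atLeastLessThan_concat lessThan_atLeast0 le0)
    have "(\<Sum>n\<in>{M..<N}. a n) \<le> (\<Sum>n\<in>{M..<N}. r/2)"
    proof (intro sum_mono)
      fix n assume "n \<in> {M..<N}" then have "norm (a n - 0) < r/2" using M by auto
      thus "a n \<le> r/2" by simp
    qed
    also have "\<dots> \<le> real N * (r/2)" using r by (simp add: mult_right_mono)
    finally have t: "(\<Sum>n\<in>{M..<N}. a n) \<le> real N * (r/2)" .
    have "real K \<le> real N" using N by simp
    with K have "2 * S / r < real N" by linarith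
    then have "2 * S < r * real N" using r by (simp add: pos_divide_less_eq mult.commute)
    then have "S < real N * (r/2)" by (simp add: mult_ac)
    with t split have "(\<Sum>n<N. a n) < real N * r" by simp
    moreover have "(\<Sum>n<N. a n) \<ge> 0" using assms(2) by (simp add: sum_nonneg)
    ultimately show "norm ((\<Sum>n<N. a n) / real N - 0) < r"
      using Npos by (simp add: divide_less_eq mult.commute)
  qed
qed

lemma expansion:
  assumes bq: "basic_seq q" and ce: "cantor_expansion q x E"
  defines "R \<equiv> \<lambda>n. real (Qprod q n) * (\<Sum>k. real_of_int (E (Suc (k+n))) / real (Qprod q (Suc (k+n))))"
  shows "T_Q q n x = R n" "R n = (real_of_int (E (Suc n)) + R (Suc n)) / real (q (Suc n))"
proof -
  define u where "u = (\<lambda>k. real_of_int (E (Suc k)) / real (Qprod q (Suc k)))"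
  have us: "u sums (x - real_of_int (E 0))" using ce unfolding cantor_expansion_def u_def by auto
  hence summ: "summable u" by (simp add: sums_iff)
  have Epos: "\<And>k. E (Suc k) \<ge> 0" and Ele: "\<And>k. E (Suc k) \<le> int (q (Suc k)) - 1"
    using ce unfolding cantor_expansion_def by auto
  have Qp: "\<And>m. real (Qprod q m) > 0" using Qprod_pos[OF bq] by simp
  have R_def': "\<And>n. R n = real (Qprod q n) * (\<Sum>k. u (k+n))" unfolding R_def u_def by simp
  have split: "x - real_of_int (E 0) = (\<Sum>k. u (k+n)) + (\<Sum>k<n. u k)"
    using suminf_split_initial_segment[OF summ, of n] us by (simp add: sums_iff)
  have ints: "real (Qprod q n) * (\<Sum>k<n. u k) \<in> \<int>"
  proof -
    have "real (Qprod q n) * (\<Sum>k<n. u k) = (\<Sum>k<n. real (Qprod q n) * u k)"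
      by (simp add: sum_distrib_left)
    moreover have "real (Qprod q n) * u k \<in> \<int>" if "k < n" for k
    proof -
      have "Qprod q (Suc k) dvd Qprod q n" using Qprod_dvd[of "Suc k" n q] that by simp
      then obtain c where c: "Qprod q n = Qprod q (Suc k) * c" by (elim dvdE)
      have "real (Qprod q n) * u k = real_of_int (E (Suc k)) * real c"
        unfolding u_def c using Qp[of "Suc k"] by (simp add: field_simps)
      thus ?thesis by simp
    qed
    ultimately show ?thesis by (auto intro: Ints_sum)
  qed
  have eq: "real (Qprod q n) * x = real (Qprod q n) * real_of_int (E 0) + real (Qprod q n) * (\<Sum>k<n. u k) + R n"
    unfolding R_def' using split by (simp add: algebra_simps)
  have sumt: "summable (\<lambda>k. u (k+n))" using summ by (rule summable_ignore_initial_segment)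
  have R0: "R n \<ge> 0" unfolding R_def' using Qp[of n] Epos
    by (intro mult_nonneg_nonneg suminf_nonneg sumt) (auto simp: u_def)
  define g where "g = (\<lambda>k. 1 / real (Qprod q (k+n)) - 1 / real (Qprod q (Suc (k+n))))"
  have Q2: "real (Qprod q m) \<ge> 2 ^ m" for m
  proof (induction m)
    case 0 then show ?case by (simp add: Qprod_def)
  next
    case (Suc m)
    have "2 \<le> real (q (Suc m))" using bq by (simp add: basic_seq_def)
    then have "2 ^ m * 2 \<le> real (Qprod q m) * real (q (Suc m))"
      using Suc by (intro mult_mono) auto
    then show ?case by (simp add: Qprod_Suc mult.commute)
  qed
  have lim: "(\<lambda>k. 1 / real (Qprod q (k+n))) \<longlonglongrightarrow> 0"
  proof (rule tendsto_sandwich[of "\<lambda>_. 0" _ _ "\<lambda>k. (1/2) ^ (k+n)"])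
    show "\<forall>\<^sub>F k in sequentially. 0 \<le> 1 / real (Qprod q (k+n))" using Qp by (simp add: less_imp_le)
    show "\<forall>\<^sub>F k in sequentially. 1 / real (Qprod q (k+n)) \<le> (1/2) ^ (k+n)"
      using Q2 by (intro always_eventually allI) (simp add: power_one_over frac_le)
    show "(\<lambda>k. (1/2::real) ^ (k+n)) \<longlonglongrightarrow> 0"
      by (rule LIMSEQ_ignore_initial_segment) (simp add: LIMSEQ_realpow_zero)
  qed simp
  have gs: "g sums (1 / real (Qprod q n))"
    using telescope_sums'[OF lim] unfolding g_def by simp
  have gk: "g j = (real (q (Suc (j+n))) - 1) / real (Qprod q (Suc (j+n)))" for j
  proof -
    have "q (Suc (j+n)) \<ge> 2" using bq unfolding basic_seq_def by simp
    then have qp: "real (q (Suc (j+n))) > 0" by simp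
    show ?thesis unfolding g_def Qprod_Suc of_nat_mult using Qp[of "j+n"] qp
      by (simp add: field_simps)
  qed
  have ug: "u (k+n) \<le> g k" for k
  proof -
    have "g k = (real (q (Suc (k+n))) - 1) / real (Qprod q (Suc (k+n)))" by (rule gk)
    moreover have "real_of_int (E (Suc (k+n))) \<le> real (q (Suc (k+n))) - 1" using Ele[of "k+n"] by linarith
    ultimately show ?thesis unfolding u_def using Qp by (simp add: divide_right_mono)
  qed
  obtain i where i: "i > n" "E i \<noteq> int (q i) - 1" using ce unfolding cantor_expansion_def INFM_nat by blast
  obtain k where k: "i = Suc (k+n)" using i(1) by (metis less_imp_Suc_add add.commute)
  have ugs: "u (k+n) < g k"
  proof -
    have "g k = (real (q (Suc (k+n))) - 1) / real (Qprod q (Suc (k+n)))" by (rule gk)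
    moreover have "E (Suc (k+n)) < int (q (Suc (k+n))) - 1" using Ele[of "k+n"] i(2) k by auto
    then have "real_of_int (E (Suc (k+n))) < real_of_int (int (q (Suc (k+n))) - 1)" by (simp only: of_int_less_iff)
    then have "real_of_int (E (Suc (k+n))) < real (q (Suc (k+n))) - 1" by simp
    ultimately show ?thesis unfolding u_def using Qp by (simp add: divide_strict_right_mono)
  qed
  have "(\<Sum>k. u (k+n)) < (\<Sum>k. g k)"
  proof -
    have "0 < (\<Sum>j. g j - u (j+n))"
      using ug ugs gs sumt by (intro suminf_pos2[of _ k]) (auto intro: summable_diff simp: sums_iff)
    also have "\<dots> = (\<Sum>j. g j) - (\<Sum>j. u (j+n))" using suminf_diff[of g "\<lambda>j. u (j+n)"] gs sumt by (simp add: sums_iff)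
    finally show ?thesis by simp
  qed
  also have "\<dots> = 1 / real (Qprod q n)" using gs by (simp add: sums_iff)
  finally have R1: "R n < 1" unfolding R_def' using Qp[of n] by (simp add: field_simps)
  show "T_Q q n x = R n"
  proof -
    have "T_Q q n x = frac (R n + (real (Qprod q n) * real_of_int (E 0) + real (Qprod q n) * (\<Sum>k<n. u k)))"
      unfolding T_Q_def eq by (simp add: algebra_simps)
    also have "\<dots> = frac (R n)" using ints by (intro frac_add_int_right) (auto intro: Ints_add Ints_mult)
    also have "\<dots> = R n" using R0 R1 by (simp add: frac_eq)
    finally show ?thesis .
  qed
  have B: "(\<Sum>j. u (j + Suc n)) = (\<Sum>j. u (j+n)) - u n"
    using suminf_split_head[OF sumt] by simp
  have qp: "real (q (Suc n)) > 0" using bq unfolding basic_seq_def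
    by (metis Suc_le_mono le0 of_nat_0_less_iff One_nat_def order_less_le_trans zero_less_numeral)
  have un: "u n = real_of_int (E (Suc n)) / (real (Qprod q n) * real (q (Suc n)))"
    unfolding u_def Qprod_Suc by simp
  define A where "A = (\<Sum>j. u (j+n))"
  have R1: "R n = real (Qprod q n) * A" unfolding R_def' A_def ..
  have R2: "R (Suc n) = real (Qprod q n) * real (q (Suc n)) * (A - u n)"
    unfolding R_def'[of "Suc n"] Qprod_Suc of_nat_mult B A_def ..
  show "R n = (real_of_int (E (Suc n)) + R (Suc n)) / real (q (Suc n))"
    unfolding R1 R2 un using Qp[of n] qp by (simp add: field_simps)
qed

lemma markov_card:
  fixes d :: "nat \<Rightarrow> real"
  assumes "\<delta> > 0" "\<And>n. d n \<ge> 0"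
  shows "\<delta> * real (card {n. n < N \<and> \<delta> \<le> d n}) \<le> (\<Sum>n<N. d n)"
proof -
  have "\<delta> * real (card {n. n < N \<and> \<delta> \<le> d n}) = (\<Sum>n\<in>{n. n < N \<and> \<delta> \<le> d n}. \<delta>)" by simp
  also have "\<dots> \<le> (\<Sum>n\<in>{n. n < N \<and> \<delta> \<le> d n}. d n)" by (intro sum_mono) auto
  also have "\<dots> \<le> (\<Sum>n<N. d n)" using assms(2) by (intro sum_mono2) auto
  finally show ?thesis .
qed

lemma transfer_ud:
  fixes s t :: "nat \<Rightarrow> real"
  assumes s01: "\<And>n. 0 \<le> s n \<and> s n < 1" and t01: "\<And>n. 0 \<le> t n \<and> t n < 1"
    and ud: "unif_distr_mod1 s"
    and avg: "(\<lambda>N. (\<Sum>n<N. \<bar>s n - t n\<bar>) / real N) \<longlonglongrightarrow> 0"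
  shows "unif_distr_mod1 t"
proof -
  define cnt where "cnt = (\<lambda>f a b N. real (card {n::nat. n < N \<and> a \<le> f n \<and> (f n::real) < b}))"
  have fs: "frac (s n) = s n" for n using s01 by (simp add: frac_eq)
  have ft: "frac (t n) = t n" for n using t01 by (simp add: frac_eq)
  have uds: "\<And>a b. 0 \<le> a \<Longrightarrow> a < b \<Longrightarrow> b \<le> 1 \<Longrightarrow> (\<lambda>N. cnt s a b N / real N) \<longlonglongrightarrow> b - a"
    using ud unfolding unif_distr_mod1_def cnt_def fs by blast
  define bad where "bad = (\<lambda>\<delta> N. real (card {n. n < N \<and> \<delta> \<le> \<bar>s n - t n\<bar>}))"
  have finite_aux: "finite {n. n < N \<and> P n}" for N and P :: "nat \<Rightarrow> bool" by simp
  show ?thesis unfolding unif_distr_mod1_def ft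
  proof (intro allI impI)
    fix a b :: real assume ab: "0 \<le> a \<and> a < b \<and> b \<le> 1"
    have "(\<lambda>N. cnt t a b N / real N) \<longlonglongrightarrow> b - a"
    proof (rule LIMSEQ_I)
      fix e :: real assume e: "e > 0"
      define \<delta> where "\<delta> = e / 5"
      have \<delta>: "\<delta> > 0" unfolding \<delta>_def using e by simp
      obtain N1 where N1: "\<And>N. N \<ge> N1 \<Longrightarrow> norm ((\<Sum>n<N. \<bar>s n - t n\<bar>) / real N - 0) < \<delta> * \<delta>"
        using LIMSEQ_D[OF avg, of "\<delta>*\<delta>"] \<delta> by auto
      have badN: "bad \<delta> N / real N < \<delta>" if "N \<ge> N1" "N \<ge> 1" for N
      proof -
        have "\<delta> * bad \<delta> N \<le> (\<Sum>n<N. \<bar>s n - t n\<bar>)" unfolding bad_def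
          by (rule markov_card[OF \<delta>]) simp
        moreover have "(\<Sum>n<N. \<bar>s n - t n\<bar>) / real N < \<delta> * \<delta>" using N1[OF that(1)] by simp
        ultimately have "\<delta> * bad \<delta> N / real N < \<delta> * \<delta>"
          using that(2) by (smt (verit) divide_right_mono of_nat_0_le_iff)
        then show ?thesis by (metis \<delta> mult_less_cancel_left_pos times_divide_eq_right)
      qed
      define a' where "a' = max 0 (a - \<delta>)"
      define b' where "b' = min 1 (b + \<delta>)"
      have a'b': "0 \<le> a'" "a' < b'" "b' \<le> 1" "b' - a' \<le> b - a + 2 * \<delta>"
        unfolding a'_def b'_def using ab \<delta> by auto
      obtain N2 where N2: "\<And>N. N \<ge> N2 \<Longrightarrow> norm (cnt s a' b' N / real N - (b' - a')) < \<delta>"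
        using LIMSEQ_D[OF uds[OF a'b'(1-3)] \<delta>] by auto
      have up: "cnt t a b N \<le> cnt s a' b' N + bad \<delta> N" for N
      proof -
        have "{n. n < N \<and> a \<le> t n \<and> t n < b} \<subseteq> {n. n < N \<and> a' \<le> s n \<and> s n < b'} \<union> {n. n < N \<and> \<delta> \<le> \<bar>s n - t n\<bar>}"
          using s01 unfolding a'_def b'_def by (auto simp: abs_if split: if_splits)
        then have "card {n. n < N \<and> a \<le> t n \<and> t n < b} \<le> card ({n. n < N \<and> a' \<le> s n \<and> s n < b'} \<union> {n. n < N \<and> \<delta> \<le> \<bar>s n - t n\<bar>})"
          by (intro card_mono) auto
        also have "\<dots> \<le> card {n. n < N \<and> a' \<le> s n \<and> s n < b'} + card {n. n < N \<and> \<delta> \<le> \<bar>s n - t n\<bar>}"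
          by (rule card_Un_le)
        finally show ?thesis unfolding cnt_def bad_def by linarith
      qed
      obtain N3 where N3: "\<And>N. N \<ge> N3 \<Longrightarrow> cnt t a b N / real N > b - a - e"
      proof (cases "a + \<delta> < b - \<delta>")
        case True
        have ab2: "0 \<le> a + \<delta>" "a + \<delta> < b - \<delta>" "b - \<delta> \<le> 1" using ab \<delta> True by auto
        obtain N4 where N4: "\<And>N. N \<ge> N4 \<Longrightarrow> norm (cnt s (a+\<delta>) (b-\<delta>) N / real N - ((b-\<delta>) - (a+\<delta>))) < \<delta>"
          using LIMSEQ_D[OF uds[OF ab2] \<delta>] by auto
        have lo: "cnt s (a+\<delta>) (b-\<delta>) N \<le> cnt t a b N + bad \<delta> N" for N
        proof -
          have "{n. n < N \<and> a+\<delta> \<le> s n \<and> s n < b-\<delta>} \<subseteq> {n. n < N \<and> a \<le> t n \<and> t n < b} \<union> {n. n < N \<and> \<delta> \<le> \<bar>s n - t n\<bar>}"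
            by (auto simp: abs_if split: if_splits)
          then have "card {n. n < N \<and> a+\<delta> \<le> s n \<and> s n < b-\<delta>} \<le> card ({n. n < N \<and> a \<le> t n \<and> t n < b} \<union> {n. n < N \<and> \<delta> \<le> \<bar>s n - t n\<bar>})"
            by (intro card_mono) auto
          also have "\<dots> \<le> card {n. n < N \<and> a \<le> t n \<and> t n < b} + card {n. n < N \<and> \<delta> \<le> \<bar>s n - t n\<bar>}"
            by (rule card_Un_le)
          finally show ?thesis unfolding cnt_def bad_def by linarith
        qed
        show ?thesis
        proof (rule that[of "max (max N1 N4) 1"])
          fix N assume N: "N \<ge> max (max N1 N4) 1"
          have Np: "real N > 0" using N by simp
          have "cnt s (a+\<delta>) (b-\<delta>) N / real N \<le> cnt t a b N / real N + bad \<delta> N / real N"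
            using lo[of N] Np by (simp add: add_divide_distrib[symmetric] divide_right_mono)
          moreover have "cnt s (a+\<delta>) (b-\<delta>) N / real N > (b - a - 2*\<delta>) - \<delta>" using N4[of N] N by simp
          moreover have "bad \<delta> N / real N < \<delta>" using badN[of N] N by simp
          ultimately show "cnt t a b N / real N > b - a - e" using e unfolding \<delta>_def by linarith
        qed
      next
        case False
        show ?thesis
        proof (rule that[of 0])
          fix N :: nat
          have "cnt t a b N / real N \<ge> 0" unfolding cnt_def by simp
          then show "cnt t a b N / real N > b - a - e" using False e unfolding \<delta>_def by linarith
        qed
      qed
      show "\<exists>no. \<forall>N\<ge>no. norm (cnt t a b N / real N - (b - a)) < e"
      proof (intro exI allI impI)
        fix N assume N: "N \<ge> max (max N1 N2) (max N3 1)"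
        have Np: "real N > 0" using N by simp
        have "cnt t a b N / real N \<le> cnt s a' b' N / real N + bad \<delta> N / real N"
          using up[of N] Np by (simp add: add_divide_distrib[symmetric] divide_right_mono)
        moreover have "cnt s a' b' N / real N < (b' - a') + \<delta>" using N2[of N] N by simp
        moreover have "bad \<delta> N / real N < \<delta>" using badN[of N] N by simp
        moreover have "cnt t a b N / real N > b - a - e" using N3[of N] N by simp
        ultimately show "norm (cnt t a b N / real N - (b - a)) < e"
          using a'b'(4) e unfolding \<delta>_def real_norm_def abs_less_iff by linarith
      qed
    qed
    then show "(\<lambda>N. real (card {n. n < N \<and> a \<le> t n \<and> t n < b}) / real N) \<longlonglongrightarrow> b - a"
      unfolding cnt_def by simp
  qed
qed


lemma T_rec:
  assumes bq: "basic_seq q" and ce: "cantor_expansion q x E"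
  shows "T_Q q n x = (real_of_int (E (Suc n)) + T_Q q (Suc n) x) / real (q (Suc n))"
  using expansion[OF bq ce, of n] expansion(1)[OF bq ce, of "Suc n"] by simp

theorem corollary3p3:
  fixes q :: "nat \<Rightarrow> nat" and x y :: real and E F :: "nat \<Rightarrow> int"
  assumes "basic_seq q"
    and "(\<lambda>N. (1 / real N) * (\<Sum>n=1..N. 1 / real (q n))) \<longlonglongrightarrow> 0"
    and "cantor_expansion q x E"
    and "Q_distribution_normal q x"
    and "cantor_expansion q y F"
    and "(\<lambda>n. \<bar>real_of_int (E n - F n)\<bar> / real (q n)) \<longlonglongrightarrow> 0"
  shows "Q_distribution_normal q y"
proof -
  note bq = assms(1)
  define a where "a = (\<lambda>n. \<bar>real_of_int (E n - F n)\<bar> / real (q n))"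
  define d where "d = (\<lambda>n. \<bar>T_Q q n x - T_Q q n y\<bar>)"
  have qp: "real (q (Suc n)) > 0" for n using bq unfolding basic_seq_def
    by (metis Suc_le_mono le0 of_nat_0_less_iff One_nat_def order_less_le_trans zero_less_numeral)
  have T01: "0 \<le> T_Q q n z \<and> T_Q q n z < 1" for n z unfolding T_Q_def by (simp add: frac_lt_1)
  have dle: "d n \<le> a (Suc n) + 1 / real (q (Suc n))" for n
  proof -
    have "T_Q q n x - T_Q q n y = (real_of_int (E (Suc n) - F (Suc n)) + (T_Q q (Suc n) x - T_Q q (Suc n) y)) / real (q (Suc n))"
      unfolding T_rec[OF bq assms(3), of n] T_rec[OF bq assms(5), of n] by (simp add: diff_divide_distrib add_divide_distrib)
    then have "d n = \<bar>real_of_int (E (Suc n) - F (Suc n)) + (T_Q q (Suc n) x - T_Q q (Suc n) y)\<bar> / real (q (Suc n))"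
      unfolding d_def using qp[of n] by simp
    also have "\<dots> \<le> (\<bar>real_of_int (E (Suc n) - F (Suc n))\<bar> + 1) / real (q (Suc n))"
      using qp[of n] T01[of "Suc n" x] T01[of "Suc n" y] by (intro divide_right_mono) (auto simp: abs_if)
    finally show ?thesis unfolding a_def by (simp add: add_divide_distrib)
  qed
  have a0: "a n \<ge> 0" for n unfolding a_def by simp
  have d0: "d n \<ge> 0" for n unfolding d_def by simp
  have c1: "(\<lambda>N. (\<Sum>n<N. a (Suc n)) / real N) \<longlonglongrightarrow> 0"
    using cesaro0[of "\<lambda>n. a (Suc n)"] a0 LIMSEQ_Suc[OF assms(6)[folded a_def]] by simp
  have c2: "(\<lambda>N. (\<Sum>n<N. 1 / real (q (Suc n))) / real N) \<longlonglongrightarrow> 0"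
    using assms(2) by (simp add: sum_shift1[of "\<lambda>n. 1 / real (q n)"] mult.commute)
  have avg: "(\<lambda>N. (\<Sum>n<N. d n) / real N) \<longlonglongrightarrow> 0"
  proof (rule tendsto_sandwich[of "\<lambda>_. 0" _ _ "\<lambda>N. (\<Sum>n<N. a (Suc n)) / real N + (\<Sum>n<N. 1 / real (q (Suc n))) / real N"])
    show "\<forall>\<^sub>F N in sequentially. 0 \<le> (\<Sum>n<N. d n) / real N"
      using d0 by (simp add: sum_nonneg)
    show "\<forall>\<^sub>F N in sequentially. (\<Sum>n<N. d n) / real N \<le> (\<Sum>n<N. a (Suc n)) / real N + (\<Sum>n<N. 1 / real (q (Suc n))) / real N"
    proof (intro always_eventually allI)
      fix N
      have "(\<Sum>n<N. d n) \<le> (\<Sum>n<N. a (Suc n)) + (\<Sum>n<N. 1 / real (q (Suc n)))"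
        using dle by (simp add: sum.distrib[symmetric] sum_mono)
      then show "(\<Sum>n<N. d n) / real N \<le> (\<Sum>n<N. a (Suc n)) / real N + (\<Sum>n<N. 1 / real (q (Suc n))) / real N"
        by (simp add: add_divide_distrib[symmetric] divide_right_mono)
    qed
    show "(\<lambda>N. (\<Sum>n<N. a (Suc n)) / real N + (\<Sum>n<N. 1 / real (q (Suc n))) / real N) \<longlonglongrightarrow> 0"
      using tendsto_add[OF c1 c2] by simp
  qed simp
  show ?thesis
    using assms(4) unfolding Q_distribution_normal_def
    by (intro transfer_ud[of "\<lambda>n. T_Q q n x" "\<lambda>n. T_Q q n y"]) (use T01 avg in \<open>auto simp: d_def\<close>)
qed

end
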